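(* Let $T\in B(H)$ satisfy $(T-t_N)^{k_N}(T-t_{N-1})^{k_{N-1}}\cdots(T-t_1)^{k_1}=0$, where $t_1,\ldots,t_N\in\mathbb C$ are pairwise distinct with $|t_1|\ge|t_2|\ge\cdots\ge|t_N|$ and $k_1,\ldots,k_N$ are positive integers. Define $R_m=\ker\big((T-t_m)^{k_m}\cdots(T-t_1)^{k_1}\big)$ for $0\le m\le N$ ($R_0=\{0\}$), $L_m=R_m\ominus R_{m-1}$ for $1\le m\le N$, and $M_m=H\ominus(L_1\oplus\cdots\oplus L_m)$. Then there exists $0\le m\le N$ such that, with respect to $H=L_1\oplus\cdots\oplus L_m\oplus M_m$, $$T=t_1 1_{L_1}\oplus\cdots\oplus t_m 1_{L_m}\oplus S,$$ where $S\in B(M_m)$ satisfies $(S-t_{m+1})^{k_{m+1}}\cdots(S-t_N)^{k_N}=0$ and $\|S\|>|t_i|$ for all $i\ge m+1$. *)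

theory Defs
  imports Complex_Main
begin

class complex_vector = real_vector +
  fixes scaleC :: "complex \<Rightarrow> 'a \<Rightarrow> 'a"
  assumes scaleC_add_right: "scaleC a (x + y) = scaleC a x + scaleC a y"
    and scaleC_add_left: "scaleC (a + b) x = scaleC a x + scaleC b x"
    and scaleC_scaleC: "scaleC a (scaleC b x) = scaleC (a * b) x"
    and scaleC_one: "scaleC 1 x = x"
    and scaleR_scaleC: "scaleR r x = scaleC (complex_of_real r) x"

class complex_inner = complex_vector + real_normed_vector +
  fixes cinner :: "'a \<Rightarrow> 'a \<Rightarrow> complex"
  assumes cinner_commute: "cinner x y = cnj (cinner y x)"
    and cinner_add_left: "cinner (x + y) z = cinner x z + cinner y z"
    and cinner_scaleC_left: "cinner (scaleC r x) y = cnj r * cinner x y"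
    and cinner_ge_zero: "Im (cinner x x) = 0 \<and> 0 \<le> Re (cinner x x)"
    and cinner_eq_zero_iff: "cinner x x = 0 \<longleftrightarrow> x = 0"
    and norm_eq_sqrt_cinner: "norm x = sqrt (Re (cinner x x))"

class chilbert = complex_inner + complete_space

definition bounded_clinear :: "('a::complex_inner \<Rightarrow> 'b::complex_inner) \<Rightarrow> bool" where
  "bounded_clinear T \<longleftrightarrow>
     (\<forall>x y. T (x + y) = T x + T y) \<and> (\<forall>c x. T (scaleC c x) = scaleC c (T x)) \<and>
     (\<exists>K. \<forall>x. norm (T x) \<le> norm x * K)"

definition shp :: "('a::complex_vector \<Rightarrow> 'a) \<Rightarrow> complex \<Rightarrow> nat \<Rightarrow> 'a \<Rightarrow> 'a" where
  "shp T c n = ((\<lambda>x. T x - scaleC c x) ^^ n)"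

text \<open>Ordered product (composition) of factors (T - c)^n; the first list
element is the leftmost (outermost) factor.\<close>
fun prodop :: "('a::complex_vector \<Rightarrow> 'a) \<Rightarrow> (complex \<times> nat) list \<Rightarrow> 'a \<Rightarrow> 'a" where
  "prodop T [] = id"
| "prodop T ((c, n) # fs) = shp T c n \<circ> prodop T fs"

definition factors :: "(nat \<Rightarrow> complex) \<Rightarrow> (nat \<Rightarrow> nat) \<Rightarrow> nat list \<Rightarrow> (complex \<times> nat) list" where
  "factors t k is = map (\<lambda>i. (t i, k i)) is"

definition orth :: "'a::complex_inner set \<Rightarrow> 'a set" where
  "orth A = {x. \<forall>y\<in>A. cinner x y = 0}"

text \<open>R_m = ker((T-t_m)^{k_m} ... (T-t_1)^{k_1}); R_0 = ker id = {0}.\<close>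
definition Rsp :: "('a::complex_inner \<Rightarrow> 'a) \<Rightarrow> (nat \<Rightarrow> complex) \<Rightarrow> (nat \<Rightarrow> nat) \<Rightarrow> nat \<Rightarrow> 'a set" where
  "Rsp T t k m = {x. prodop T (factors t k (rev [1..<m+1])) x = 0}"

definition Lsp :: "('a::complex_inner \<Rightarrow> 'a) \<Rightarrow> (nat \<Rightarrow> complex) \<Rightarrow> (nat \<Rightarrow> nat) \<Rightarrow> nat \<Rightarrow> 'a set" where
  "Lsp T t k m = Rsp T t k m \<inter> orth (Rsp T t k (m - 1))"

text \<open>M_m = H \<ominus> (L_1 \<oplus> ... \<oplus> L_m), i.e. the orthogonal complement of
the (closed) span of L_1,...,L_m, which equals orth of their union.\<close>
definition Msp :: "('a::complex_inner \<Rightarrow> 'a) \<Rightarrow> (nat \<Rightarrow> complex) \<Rightarrow> (nat \<Rightarrow> nat) \<Rightarrow> nat \<Rightarrow> 'a set" where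
  "Msp T t k m = orth (\<Union>i\<in>{1..m}. Lsp T t k i)"

definition opnorm_on :: "'a::complex_inner set \<Rightarrow> ('a \<Rightarrow> 'a) \<Rightarrow> real" where
  "opnorm_on M S = Sup {norm (S x) | x. x \<in> M \<and> norm x \<le> 1}"

end

theory Submission
  imports Defs
begin

lemma scaleC_zero_right[simp]: "scaleC a (0::'a::complex_vector) = 0"
proof -
  have "scaleC a (0::'a) = scaleC a 0 + scaleC a 0" using scaleC_add_right[of a "0::'a" 0] by simp
  thus ?thesis by simp
qed

lemma scaleC_zero_left[simp]: "scaleC 0 (x::'a::complex_vector) = 0"
proof -
  have "scaleC 0 x = scaleC 0 x + scaleC 0 x" using scaleC_add_left[of 0 0 x] by simp
  thus ?thesis by simp
qed

lemma scaleC_minus_right: "scaleC a (- x) = - scaleC a (x::'a::complex_vector)"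
proof -
  have "scaleC a x + scaleC a (-x) = 0" using scaleC_add_right[of a x "-x"] by simp
  thus ?thesis using minus_unique by metis
qed

lemma scaleC_minus_left: "scaleC (- a) x = - scaleC a (x::'a::complex_vector)"
proof -
  have "scaleC a x + scaleC (-a) x = 0" using scaleC_add_left[of a "-a" x] by simp
  thus ?thesis using minus_unique by metis
qed

lemma scaleC_diff_right: "scaleC a (x - y) = scaleC a x - scaleC a (y::'a::complex_vector)"
  by (metis diff_conv_add_uminus scaleC_add_right scaleC_minus_right)

lemma scaleC_diff_left: "scaleC (a - b) x = scaleC a x - scaleC b (x::'a::complex_vector)"
  by (metis diff_conv_add_uminus scaleC_add_left scaleC_minus_left)

lemma scaleC_sum_right: "scaleC a (sum f A) = (\<Sum>i\<in>A. scaleC a (f i::'a::complex_vector))"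
  by (induction A rule: infinite_finite_induct) (simp_all add: scaleC_add_right)

lemma cinner_add_right: "cinner x (y + z) = cinner x y + cinner x (z::'a::complex_inner)"
  by (metis cinner_add_left cinner_commute complex_cnj_add)

lemma cinner_scaleC_right: "cinner x (scaleC r y) = r * cinner x (y::'a::complex_inner)"
  by (metis cinner_commute cinner_scaleC_left complex_cnj_cnj complex_cnj_mult)

lemma cinner_zero_left[simp]: "cinner 0 (y::'a::complex_inner) = 0"
  using cinner_add_left[of 0 0 y] by simp

lemma cinner_zero_right[simp]: "cinner y (0::'a::complex_inner) = 0"
  using cinner_add_right[of y 0 0] by simp

lemma cinner_minus_left: "cinner (-x) (y::'a::complex_inner) = - cinner x y"
  using cinner_add_left[of x "-x" y] minus_unique by (metis add.right_inverse cinner_zero_left)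

lemma cinner_minus_right: "cinner y (-x::'a::complex_inner) = - cinner y x"
  using cinner_add_right[of y x "-x"] minus_unique by (metis add.right_inverse cinner_zero_right)

lemma cinner_diff_left: "cinner (x - z) (y::'a::complex_inner) = cinner x y - cinner z y"
  by (metis diff_conv_add_uminus cinner_add_left cinner_minus_left)

lemma cinner_diff_right: "cinner y (x - z::'a::complex_inner) = cinner y x - cinner y z"
  by (metis diff_conv_add_uminus cinner_add_right cinner_minus_right)

lemma cinner_sum_right: "cinner x (sum f A) = (\<Sum>i\<in>A. cinner x (f i::'a::complex_inner))"
  by (induction A rule: infinite_finite_induct) (simp_all add: cinner_add_right)

lemma cinner_self_eq: "cinner x (x::'a::complex_inner) = complex_of_real ((norm x)^2)"
proof -
  have "(norm x)^2 = Re (cinner x x)" using norm_eq_sqrt_cinner[of x] cinner_ge_zero[of x] by simp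
  thus ?thesis using cinner_ge_zero[of x] by (simp add: complex_eq_iff)
qed

lemma norm_sq_cinner: "(norm x)^2 = Re (cinner x (x::'a::complex_inner))"
  by (simp add: cinner_self_eq)

lemma norm_sq_add: "(norm (a + b))^2 = (norm a)^2 + 2 * Re (cinner a b) + (norm (b::'a::complex_inner))^2"
proof -
  have e: "cinner (a+b) (a+b) = cinner a a + cinner a b + cinner b a + cinner b b"
    by (simp add: cinner_add_left cinner_add_right)
  have r: "Re (cinner b a) = Re (cinner a b)" using cinner_commute[of b a] by simp
  have "Re (cinner (a+b) (a+b)) = Re (cinner a a) + 2 * Re (cinner a b) + Re (cinner b b)"
    unfolding e using r by simp
  thus ?thesis by (simp only: norm_sq_cinner)
qed

lemma norm_scaleC: "norm (scaleC c x) = cmod c * norm (x::'a::complex_inner)"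
proof -
  have "cinner (scaleC c x) (scaleC c x) = (cnj c * c) * cinner x x"
    by (simp add: cinner_scaleC_left cinner_scaleC_right mult.assoc)
  also have "cnj c * c = complex_of_real ((cmod c)^2)" by (metis complex_norm_square mult.commute of_real_power)
  finally have "cinner (scaleC c x) (scaleC c x) = complex_of_real ((cmod c * norm x)^2)"
    by (simp add: cinner_self_eq power_mult_distrib)
  hence "(norm (scaleC c x))^2 = (cmod c * norm x)^2" by (simp add: norm_sq_cinner)
  thus ?thesis by (simp add: power2_eq_iff_nonneg)
qed

definition lin :: "('a::complex_vector \<Rightarrow> 'a) \<Rightarrow> bool" where
  "lin f \<longleftrightarrow> (\<forall>x y. f (x + y) = f x + f y) \<and> (\<forall>c x. f (scaleC c x) = scaleC c (f x))"

lemma lin_add: "lin f \<Longrightarrow> f (x + y) = f x + f y" by (simp add: lin_def)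
lemma lin_scaleC: "lin f \<Longrightarrow> f (scaleC c x) = scaleC c (f x)" by (simp add: lin_def)
lemma lin_zero: "lin f \<Longrightarrow> f 0 = 0"
  using lin_scaleC[of f 0 0] by simp
lemma lin_minus: "lin f \<Longrightarrow> f (- x) = - f x"
  using lin_add[of f x "-x"] lin_zero[of f] minus_unique by (metis add.right_inverse)
lemma lin_diff: "lin f \<Longrightarrow> f (x - y) = f x - f y"
  by (metis diff_conv_add_uminus lin_add lin_minus)
lemma lin_sum: "lin f \<Longrightarrow> f (sum g A) = (\<Sum>i\<in>A. f (g i))"
  by (induction A rule: infinite_finite_induct) (simp_all add: lin_add lin_zero)
lemma lin_id: "lin id" by (simp add: lin_def)
lemma lin_comp: "lin f \<Longrightarrow> lin g \<Longrightarrow> lin (f \<circ> g)" by (simp add: lin_def)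
lemma lin_funpow: "lin f \<Longrightarrow> lin (f ^^ n)"
  by (induction n) (simp_all add: lin_id lin_comp)

definition comm :: "('a \<Rightarrow> 'a) \<Rightarrow> ('a \<Rightarrow> 'a) \<Rightarrow> bool" where
  "comm f g \<longleftrightarrow> f \<circ> g = g \<circ> f"

lemma comm_sym: "comm f g \<Longrightarrow> comm g f" by (simp add: comm_def)
lemma comm_id: "comm f id" by (simp add: comm_def)
lemma comm_comp: "comm f g \<Longrightarrow> comm f h \<Longrightarrow> comm f (g \<circ> h)"
  unfolding comm_def by (metis comp_assoc)
lemma comm_funpow: "comm f g \<Longrightarrow> comm f (g ^^ n)"
  by (induction n) (simp_all add: comm_id comm_comp)

lemma shp_0[simp]: "shp T c 0 x = x" by (simp add: shp_def)
lemma shp_Suc: "shp T c (Suc n) x = T (shp T c n x) - scaleC c (shp T c n x)"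
  by (simp add: shp_def)
lemma shp_Suc': "shp T c (Suc n) x = shp T c n (T x - scaleC c x)"
  by (simp only: shp_def funpow_Suc_right comp_apply)

lemma prodop_append: "prodop T (xs @ ys) = prodop T xs \<circ> prodop T ys"
  by (induction T xs rule: prodop.induct) auto

locale opctx =
  fixes T :: "'a::complex_inner \<Rightarrow> 'a" and t :: "nat \<Rightarrow> complex" and k :: "nat \<Rightarrow> nat" and N :: nat
  assumes Tlin: "lin T"
    and Tbnd: "\<exists>K. \<forall>x. norm (T x) \<le> norm x * K"
    and tinj: "inj_on t {1..N}"
    and kpos: "1 \<le> i \<Longrightarrow> i \<le> N \<Longrightarrow> 0 < k i"
    and tmono: "1 \<le> i \<Longrightarrow> i \<le> j \<Longrightarrow> j \<le> N \<Longrightarrow> norm (t j) \<le> norm (t i)"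
    and poly0: "prodop T (factors t k (rev [1..<N+1])) = (\<lambda>x. 0)"
begin

definition D :: "complex \<Rightarrow> 'a \<Rightarrow> 'a" where "D c x = T x - scaleC c x"

lemma lin_D: "lin (D c)"
  unfolding lin_def D_def
proof (intro conjI allI)
  fix x y show "T (x + y) - scaleC c (x + y) = T x - scaleC c x + (T y - scaleC c y)"
    by (simp add: lin_add[OF Tlin] scaleC_add_right)
next
  fix a x show "T (scaleC a x) - scaleC c (scaleC a x) = scaleC a (T x - scaleC c x)"
    by (simp add: lin_scaleC[OF Tlin] scaleC_diff_right scaleC_scaleC mult.commute)
qed

lemma shp_eq: "shp T c n = D c ^^ n"
  by (simp add: shp_def D_def[abs_def])

lemma lin_shp: "lin (shp T c n)"
  by (simp add: shp_eq lin_funpow lin_D)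

lemma lin_prodop: "lin (prodop T fs)"
proof (induction fs)
  case (Cons a fs) thus ?case by (cases a) (simp only: prodop.simps lin_comp lin_shp)
qed (simp only: prodop.simps lin_id)

lemma comm_D: "comm (D a) (D b)"
  unfolding comm_def fun_eq_iff comp_apply
proof
  fix x
  have e: "D a (D b x) = T (T x) - scaleC b (T x) - scaleC a (T x) + scaleC (a*b) x" for a b
    unfolding D_def lin_diff[OF Tlin] lin_scaleC[OF Tlin] scaleC_diff_right scaleC_scaleC
    by (simp add: algebra_simps)
  show "D a (D b x) = D b (D a x)" unfolding e by (simp add: algebra_simps mult.commute)
qed

lemma comm_shp: "comm (shp T a n) (shp T b m)"
  unfolding shp_eq by (rule comm_funpow, rule comm_sym, rule comm_funpow, rule comm_sym, rule comm_D)

lemma comm_shp_prodop: "comm (shp T a n) (prodop T fs)"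
proof (induction fs)
  case (Cons b fs) thus ?case by (cases b) (simp only: prodop.simps comm_comp comm_shp)
qed (simp only: prodop.simps comm_id)

lemma comm_prodop: "comm (prodop T fs) (prodop T gs)"
proof (induction fs)
  case (Cons b fs) thus ?case
    by (cases b) (simp only: prodop.simps, rule comm_sym, rule comm_comp,
       rule comm_sym, rule comm_shp_prodop, rule comm_sym, assumption)
qed (simp only: prodop.simps, rule comm_sym, rule comm_id)

lemma prodop_rev: "prodop T (rev fs) = prodop T fs"
proof (induction fs)
  case (Cons b fs)
  obtain c n where b: "b = (c, n)" by (cases b)
  show ?case using comm_shp_prodop[of c n fs] Cons
    by (simp add: b prodop_append comm_def)
qed simp

end

definition csub :: "'a::complex_vector set \<Rightarrow> bool" where
  "csub M \<longleftrightarrow> 0 \<in> M \<and> (\<forall>x\<in>M. \<forall>y\<in>M. x + y \<in> M) \<and> (\<forall>c. \<forall>x\<in>M. scaleC c x \<in> M)"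

lemma csub_0: "csub M \<Longrightarrow> 0 \<in> M" by (simp add: csub_def)
lemma csub_add: "csub M \<Longrightarrow> x \<in> M \<Longrightarrow> y \<in> M \<Longrightarrow> x + y \<in> M" by (simp add: csub_def)
lemma csub_scaleC: "csub M \<Longrightarrow> x \<in> M \<Longrightarrow> scaleC c x \<in> M" by (simp add: csub_def)
lemma csub_minus: "csub M \<Longrightarrow> x \<in> M \<Longrightarrow> - x \<in> M"
  using csub_scaleC[of M x "-1"] by (simp add: scaleC_minus_left scaleC_one)
lemma csub_diff: "csub M \<Longrightarrow> x \<in> M \<Longrightarrow> y \<in> M \<Longrightarrow> x - y \<in> M"
  by (metis csub_add csub_minus diff_conv_add_uminus)
lemma csub_sum: "csub M \<Longrightarrow> (\<And>i. i \<in> A \<Longrightarrow> f i \<in> M) \<Longrightarrow> sum f A \<in> M"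
  by (induction A rule: infinite_finite_induct) (simp_all add: csub_0 csub_add)

lemma csub_orth: "csub (orth A)"
  unfolding csub_def orth_def
  by (simp add: cinner_add_left cinner_scaleC_left)

lemma orth_antimono: "A \<subseteq> B \<Longrightarrow> orth B \<subseteq> orth A"
  unfolding orth_def by auto

lemma small_real: 
  fixes X Y :: real
  assumes "\<And>s. s > 0 \<Longrightarrow> 2 * s * X \<le> s^2 * Y"
  shows "X \<le> 0"
proof (rule ccontr)
  assume "\<not> X \<le> 0" hence X: "X > 0" by simp
  define s where "s = X / (\<bar>Y\<bar> + 1)"
  have s: "s > 0" using X by (simp add: s_def)
  have "2 * s * X \<le> s^2 * Y" using assms s by simp
  also have "\<dots> \<le> s^2 * \<bar>Y\<bar>" by (simp add: mult_left_mono)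
  also have "\<dots> = s * (s * \<bar>Y\<bar>)" by (simp add: power2_eq_square)
  also have "s * \<bar>Y\<bar> < X"
  proof -
    have "s * \<bar>Y\<bar> = X * (\<bar>Y\<bar> / (\<bar>Y\<bar> + 1))" by (simp add: s_def)
    also have "\<dots> < X * 1" using X by (intro mult_strict_left_mono) simp_all
    finally show ?thesis by simp
  qed
  hence "s * (s * \<bar>Y\<bar>) < s * X" using s by simp
  finally show False using s X by simp
qed

context opctx begin

definition Eig :: "complex \<Rightarrow> 'a set" where "Eig c = {x. T x = scaleC c x}"
definition inv :: "'a set \<Rightarrow> bool" where "inv M \<longleftrightarrow> (\<forall>x\<in>M. T x \<in> M)"
definition bnd :: "'a set \<Rightarrow> complex \<Rightarrow> bool" where
  "bnd M lam \<longleftrightarrow> (\<forall>x\<in>M. norm (T x) \<le> cmod lam * norm x)"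

lemma AL:
  assumes M: "csub M" and iv: "inv M" and b: "bnd M lam" and eM: "e \<in> M"
    and ee: "T e = scaleC lam e" and wM: "w \<in> M"
  shows "cinner (T w) e = cnj lam * cinner w e"
proof (cases "lam = 0 \<or> e = 0")
  case True
  thus ?thesis
  proof
    assume "lam = 0"
    hence "norm (T w) \<le> 0" using b wM by (simp add: bnd_def)
    hence "T w = 0" by simp
    thus ?thesis using \<open>lam = 0\<close> by simp
  qed simp
next
  case False
  hence lam0: "lam \<noteq> 0" and e0: "e \<noteq> 0" by auto
  have ee0: "cinner e e \<noteq> 0" using e0 cinner_eq_zero_iff by blast
  define \<alpha> where "\<alpha> = cinner e w / cinner e e"
  define w' where "w' = w - scaleC \<alpha> e"
  have w'M: "w' \<in> M" unfolding w'_def using M wM eM by (simp add: csub_diff csub_scaleC)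
  have ew': "cinner e w' = 0" unfolding w'_def \<alpha>_def using ee0
    by (simp add: cinner_diff_right cinner_scaleC_right)
  have w'e: "cinner w' e = 0" using ew' cinner_commute[of w' e] by simp
  define \<beta> where "\<beta> = cinner e (T w')"
  define c where "c = lam * cnj \<beta>"
  define X where "X = (cmod lam * cmod \<beta>)^2"
  define Y where "Y = (cmod c)^2 * (cmod lam)^2 * (norm w')^2"
  have "2 * s * X \<le> s^2 * Y" if s: "s > 0" for s
  proof -
    define z where "z = e + scaleC (of_real s * c) w'"
    have zM: "z \<in> M" unfolding z_def using M eM w'M by (simp add: csub_add csub_scaleC)
    have Tz: "T z = scaleC lam e + scaleC (of_real s * c) (T w')"
      unfolding z_def by (simp add: lin_add[OF Tlin] lin_scaleC[OF Tlin] ee)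
    have nz: "(norm z)^2 = (norm e)^2 + (s * cmod c)^2 * (norm w')^2"
      unfolding z_def norm_sq_add using ew'
      by (simp add: cinner_scaleC_right norm_scaleC norm_mult power_mult_distrib)
    have inner: "cinner (scaleC lam e) (scaleC (of_real s * c) (T w')) = of_real (s * X)"
    proof -
      have "cinner (scaleC lam e) (scaleC (of_real s * c) (T w')) = cnj lam * (of_real s * c * \<beta>)"
        by (simp add: cinner_scaleC_left cinner_scaleC_right \<beta>_def)
      also have "\<dots> = of_real s * ((cnj lam * lam) * (cnj \<beta> * \<beta>))" by (simp add: c_def algebra_simps)
      also have "cnj lam * lam = of_real ((cmod lam)^2)" by (metis complex_norm_square mult.commute of_real_power)
      also have "cnj \<beta> * \<beta> = of_real ((cmod \<beta>)^2)" by (metis complex_norm_square mult.commute of_real_power)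
      finally show ?thesis by (simp add: X_def power_mult_distrib)
    qed
    have nTz: "(norm (T z))^2 = (cmod lam)^2 * (norm e)^2 + 2 * (s * X) + (s * cmod c)^2 * (norm (T w'))^2"
      unfolding Tz norm_sq_add inner
      by (simp add: norm_scaleC norm_mult power_mult_distrib)
    have "norm (T z) \<le> cmod lam * norm z" using b zM by (simp add: bnd_def)
    hence "(norm (T z))^2 \<le> (cmod lam * norm z)^2" by (intro power_mono) simp_all
    hence "(cmod lam)^2 * (norm e)^2 + 2 * (s * X) + (s * cmod c)^2 * (norm (T w'))^2
        \<le> (cmod lam)^2 * ((norm e)^2 + (s * cmod c)^2 * (norm w')^2)"
      unfolding nTz power_mult_distrib[of "cmod lam"] nz by simp
    hence h1: "(cmod lam)^2 * (norm e)^2 + 2 * (s * X) + (s * cmod c)^2 * (norm (T w'))^2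
        \<le> (cmod lam)^2 * (norm e)^2 + (cmod lam)^2 * ((s * cmod c)^2 * (norm w')^2)"
      by (simp only: distrib_left)
    have "0 \<le> (s * cmod c)^2 * (norm (T w'))^2" by simp
    hence "2 * (s * X) \<le> (cmod lam)^2 * ((s * cmod c)^2 * (norm w')^2)"
      using h1 by linarith
    thus ?thesis by (simp add: Y_def power_mult_distrib algebra_simps)
  qed
  hence "X \<le> 0" by (rule small_real)
  hence "cmod lam * cmod \<beta> = 0" unfolding X_def by simp
  hence b0: "\<beta> = 0" using lam0 by simp
  have Tw'e: "cinner (T w') e = 0" using b0 cinner_commute[of "T w'" e] by (simp add: \<beta>_def)
  have wdec: "w = w' + scaleC \<alpha> e" by (simp add: w'_def)
  have "cinner (T w) e = cinner (T w') e + cinner (scaleC (\<alpha> * lam) e) e"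
    by (subst wdec) (simp add: lin_add[OF Tlin] lin_scaleC[OF Tlin] ee scaleC_scaleC cinner_add_left)
  also have "\<dots> = cnj lam * (cnj \<alpha> * cinner e e)" using Tw'e by (simp add: cinner_scaleC_left)
  also have "cnj \<alpha> * cinner e e = cinner w e"
    by (subst wdec) (simp add: cinner_add_left cinner_scaleC_left w'e)
  finally show ?thesis .
qed

lemma LA:
  assumes M: "csub M" and iv: "inv M" and b: "bnd M lam"
  shows "x \<in> M \<Longrightarrow> shp T lam n x = 0 \<Longrightarrow> x \<in> Eig lam"
proof (induction n arbitrary: x)
  case 0 thus ?case by (simp add: Eig_def lin_zero[OF Tlin])
next
  case (Suc n)
  define y where "y = T x - scaleC lam x"
  have yM: "y \<in> M" unfolding y_def using Suc.prems M iv by (simp add: csub_diff csub_scaleC inv_def)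
  have "y \<in> Eig lam" using Suc.IH[OF yM] Suc.prems(2) by (simp add: shp_Suc' y_def)
  hence Ty: "T y = scaleC lam y" by (simp add: Eig_def)
  have "cinner (T x) y = cnj lam * cinner x y" using AL[OF M iv b yM Ty Suc.prems(1)] .
  hence "cinner y y = 0" by (simp add: y_def cinner_diff_left cinner_scaleC_left)
  hence "y = 0" using cinner_eq_zero_iff by blast
  thus ?case by (simp add: Eig_def y_def)
qed

end

context opctx begin

definition Mp :: "nat \<Rightarrow> 'a set" where "Mp j = orth (\<Union>i\<in>{1..j}. Eig (t i))"
definition goodH :: "nat \<Rightarrow> bool" where "goodH m \<longleftrightarrow> (\<forall>i\<in>{1..m}. bnd (Mp (i-1)) (t i))"

lemma Mp_0: "Mp 0 = UNIV" by (simp add: Mp_def orth_def)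
lemma Mp_Suc: "Mp (Suc j) = Mp j \<inter> orth (Eig (t (Suc j)))"
proof -
  have "{1..Suc j} = insert (Suc j) {1..j}" by auto
  thus ?thesis unfolding Mp_def orth_def by auto
qed
lemma Mp_anti: "i \<le> j \<Longrightarrow> Mp j \<subseteq> Mp i"
  unfolding Mp_def by (intro orth_antimono UN_mono) auto
lemma csub_Mp: "csub (Mp j)" by (simp add: Mp_def csub_orth)
lemma csub_Eig: "csub (Eig c)"
  unfolding csub_def Eig_def
  by (simp add: lin_add[OF Tlin] lin_scaleC[OF Tlin] lin_zero[OF Tlin] scaleC_add_right scaleC_scaleC mult.commute)
lemma Mp_cinner: "x \<in> Mp j \<Longrightarrow> 1 \<le> l \<Longrightarrow> l \<le> j \<Longrightarrow> y \<in> Eig (t l) \<Longrightarrow> cinner x y = 0"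
  unfolding Mp_def orth_def by auto

lemma shp_pres: "csub M \<Longrightarrow> inv M \<Longrightarrow> x \<in> M \<Longrightarrow> shp T c n x \<in> M"
  by (induction n) (simp_all add: shp_Suc csub_diff csub_scaleC inv_def)

lemma prodop_pres: "csub M \<Longrightarrow> inv M \<Longrightarrow> x \<in> M \<Longrightarrow> prodop T fs x \<in> M"
proof (induction fs arbitrary: x)
  case (Cons a fs) thus ?case by (cases a) (simp add: shp_pres)
qed simp

lemma eig_shp: "x \<in> Eig c' \<Longrightarrow> shp T c n x = scaleC ((c' - c)^n) x"
proof (induction n)
  case (Suc n)
  have "T x = scaleC c' x" using Suc.prems by (simp add: Eig_def)
  thus ?case using Suc.IH Suc.prems
    by (simp add: shp_Suc lin_scaleC[OF Tlin] scaleC_scaleC scaleC_diff_left[symmetric] algebra_simps)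
qed (simp add: scaleC_one)

lemma struct:
  assumes g: "goodH m" and mN: "m \<le> N"
  shows "j \<le> m \<Longrightarrow> (\<forall>i\<in>{1..j}. Eig (t i) \<subseteq> Mp (i-1)) \<and> (\<forall>i\<le>j. inv (Mp i))"
proof (induction j)
  case 0 thus ?case by (simp add: Mp_0 inv_def)
next
  case (Suc j)
  from Suc.IH Suc.prems have A: "\<forall>i\<in>{1..j}. Eig (t i) \<subseteq> Mp (i-1)" and I: "\<forall>i\<le>j. inv (Mp i)" by auto
  have bj: "bnd (Mp i) (t (Suc i))" if "i \<le> j" for i
  proof -
    have "Suc i \<in> {1..m}" using that Suc.prems by simp
    hence "bnd (Mp (Suc i - 1)) (t (Suc i))" using g unfolding goodH_def by blast
    thus ?thesis by simp
  qed
  have E: "Eig (t (Suc j)) \<subseteq> Mp j"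
  proof
    fix e assume e: "e \<in> Eig (t (Suc j))"
    have "i \<le> j \<Longrightarrow> e \<in> Mp i" for i
    proof (induction i)
      case 0 thus ?case by (simp add: Mp_0)
    next
      case (Suc i)
      hence eM: "e \<in> Mp i" by simp
      have "cinner e f = 0" if f: "f \<in> Eig (t (Suc i))" for f
      proof -
        have fM: "f \<in> Mp i" using A f Suc.prems by force
        have Ii: "inv (Mp i)" using I Suc.prems by simp
        have bi: "bnd (Mp i) (t (Suc i))" using bj Suc.prems by simp
        have Tf: "T f = scaleC (t (Suc i)) f" using f by (simp add: Eig_def)
        have "cinner (T e) f = cnj (t (Suc i)) * cinner e f"
          using AL[OF csub_Mp Ii bi fM Tf eM] .
        moreover have "T e = scaleC (t (Suc j)) e" using e by (simp add: Eig_def)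
        ultimately have "cnj (t (Suc j)) * cinner e f = cnj (t (Suc i)) * cinner e f"
          by (simp add: cinner_scaleC_left)
        moreover have "t (Suc j) \<noteq> t (Suc i)"
        proof
          assume h: "t (Suc j) = t (Suc i)"
          have "Suc j \<in> {1..N}" "Suc i \<in> {1..N}" using Suc.prems \<open>Suc j \<le> m\<close> mN by auto
          hence "Suc j = Suc i" using inj_onD[OF tinj h] by blast
          thus False using Suc.prems by simp
        qed
        ultimately show ?thesis by (metis complex_cnj_cancel_iff mult_cancel_right)
      qed
      thus ?case using eM by (simp add: Mp_Suc orth_def)
    qed
    thus "e \<in> Mp j" by simp
  qed
  have IS: "inv (Mp (Suc j))"
    unfolding inv_def
  proof
    fix w assume w: "w \<in> Mp (Suc j)"
    hence wj: "w \<in> Mp j" by (simp add: Mp_Suc)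
    have "T w \<in> Mp j" using I wj by (simp add: inv_def)
    moreover have "cinner (T w) f = 0" if f: "f \<in> Eig (t (Suc j))" for f
    proof -
      have Ij: "inv (Mp j)" using I by simp
      have bjj: "bnd (Mp j) (t (Suc j))" using bj by simp
      have Tf: "T f = scaleC (t (Suc j)) f" using f by (simp add: Eig_def)
      have "cinner (T w) f = cnj (t (Suc j)) * cinner w f"
        using AL[OF csub_Mp Ij bjj _ Tf wj] E f by blast
      thus ?thesis using w f by (simp add: Mp_Suc orth_def)
    qed
    ultimately show "T w \<in> Mp (Suc j)" by (simp add: Mp_Suc orth_def)
  qed
  have A': "\<forall>i\<in>{1..Suc j}. Eig (t i) \<subseteq> Mp (i-1)"
  proof
    fix i assume i: "i \<in> {1..Suc j}"
    show "Eig (t i) \<subseteq> Mp (i-1)"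
    proof (cases "i = Suc j")
      case True thus ?thesis using E by simp
    next
      case False hence "i \<in> {1..j}" using i by auto
      thus ?thesis using A by blast
    qed
  qed
  have I': "\<forall>i\<le>Suc j. inv (Mp i)" using I IS le_Suc_eq by auto
  show ?case using A' I' by blast
qed

lemma range_lemma:
  assumes g: "goodH m" and mN: "m \<le> N" and i: "Suc i \<le> m" and w: "w \<in> Mp i" and n: "n > 0"
  shows "shp T (t (Suc i)) n w \<in> Mp (Suc i)"
proof -
  obtain n' where n': "n = Suc n'" using n by (cases n) auto
  have I: "inv (Mp i)" using struct[OF g mN, of m] i by simp
  have "Suc i \<in> {1..m}" using i by simp
  hence "bnd (Mp (Suc i - 1)) (t (Suc i))" using g unfolding goodH_def by blast
  hence b: "bnd (Mp i) (t (Suc i))" by simp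
  have EM: "Eig (t (Suc i)) \<subseteq> Mp i" using struct[OF g mN, of m] i by force
  define v where "v = shp T (t (Suc i)) n' w"
  have vM: "v \<in> Mp i" unfolding v_def using shp_pres[OF csub_Mp I w] .
  have "T v - scaleC (t (Suc i)) v \<in> Mp i"
    using vM I csub_Mp by (simp add: inv_def csub_diff csub_scaleC)
  moreover have "cinner (T v - scaleC (t (Suc i)) v) f = 0" if f: "f \<in> Eig (t (Suc i))" for f
  proof -
    have Tf: "T f = scaleC (t (Suc i)) f" using f by (simp add: Eig_def)
    have "cinner (T v) f = cnj (t (Suc i)) * cinner v f"
      using AL[OF csub_Mp I b _ Tf vM] EM f by blast
    thus ?thesis by (simp add: cinner_diff_left cinner_scaleC_left)
  qed
  ultimately show ?thesis by (simp add: n' shp_Suc v_def Mp_Suc orth_def)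
qed

end

context opctx begin

lemma goodH_bnd: "goodH m \<Longrightarrow> Suc i \<le> m \<Longrightarrow> bnd (Mp i) (t (Suc i))"
proof -
  assume g: "goodH m" and i: "Suc i \<le> m"
  have "Suc i \<in> {1..m}" using i by simp
  hence "bnd (Mp (Suc i - 1)) (t (Suc i))" using g unfolding goodH_def by blast
  thus ?thesis by simp
qed

lemma t_neq: "a \<in> {1..N} \<Longrightarrow> b \<in> {1..N} \<Longrightarrow> a \<noteq> b \<Longrightarrow> t a \<noteq> t b"
  using inj_onD[OF tinj] by blast

lemma claimC:
  assumes g: "goodH m" and mN: "m \<le> N" and jm: "j \<le> m"
  shows "1 \<le> i \<Longrightarrow> i \<le> Suc j \<Longrightarrow> w \<in> Mp (i-1) \<Longrightarrow>
    prodop T (factors t k (rev [i..<Suc j])) w = 0 \<Longrightarrow>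
    \<exists>f. (\<forall>l\<in>{i..j}. f l \<in> Eig (t l)) \<and> w = sum f {i..j}"
proof (induction "Suc j - i" arbitrary: i w)
  case 0
  hence "i = Suc j" by simp
  hence "w = 0" using "0.prems" by (simp add: factors_def)
  thus ?case using \<open>i = Suc j\<close> by (intro exI[of _ "\<lambda>_. 0"]) simp
next
  case (Suc d)
  have ij: "i \<le> j" using Suc.hyps by simp
  obtain i' where i': "i = Suc i'" using Suc.prems(1) by (cases i) auto
  have iN: "i \<in> {1..N}" using ij jm mN Suc.prems(1) by simp
  define u where "u = shp T (t i) (k i) w"
  have "[i..<Suc j] = i # [Suc i..<Suc j]" using ij by (simp add: upt_conv_Cons)
  hence "rev [i..<Suc j] = rev [Suc i..<Suc j] @ [i]" by simp
  hence pu: "prodop T (factors t k (rev [Suc i..<Suc j])) u = 0"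
    using Suc.prems(4) by (simp add: factors_def prodop_append u_def)
  have wM: "w \<in> Mp i'" using Suc.prems(3) i' by simp
  have uM: "u \<in> Mp i" unfolding u_def i'
    using range_lemma[OF g mN _ wM, of "k (Suc i')"] ij jm kpos[of "Suc i'"] iN i' by simp
  have d: "d = Suc j - Suc i" using Suc.hyps(2) by simp
  have ex: "\<exists>f. (\<forall>l\<in>{Suc i..j}. f l \<in> Eig (t l)) \<and> u = sum f {Suc i..j}"
    by (rule Suc.hyps(1)[OF d _ _ _ pu]) (use ij uM in simp_all)
  then obtain gg where gg: "\<forall>l\<in>{Suc i..j}. gg l \<in> Eig (t l)" and ug: "u = sum gg {Suc i..j}"
    by blast
  define h where "h l = scaleC (inverse ((t l - t i)^(k i))) (gg l)" for l
  have hE: "h l \<in> Eig (t l)" if "l \<in> {Suc i..j}" for l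
    unfolding h_def using csub_scaleC[OF csub_Eig] gg that by blast
  have sh: "shp T (t i) (k i) (h l) = gg l" if l: "l \<in> {Suc i..j}" for l
  proof -
    have "t l \<noteq> t i" using t_neq[of l i] l iN jm mN by auto
    hence "(t l - t i)^(k i) \<noteq> 0" by simp
    moreover have "shp T (t i) (k i) (gg l) = scaleC ((t l - t i)^(k i)) (gg l)"
      using gg l by (intro eig_shp) blast
    ultimately show ?thesis unfolding h_def
      by (simp add: lin_scaleC[OF lin_shp] scaleC_scaleC scaleC_one)
  qed
  have SE: "\<forall>l\<in>{1..m}. Eig (t l) \<subseteq> Mp (l-1)" using struct[OF g mN, of m] by simp
  have hM: "h l \<in> Mp i'" if l: "l \<in> {Suc i..j}" for l
  proof -
    have "h l \<in> Mp (l-1)" using SE hE[OF l] l jm by auto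
    moreover have "Mp (l-1) \<subseteq> Mp i'" using l i' by (intro Mp_anti) auto
    ultimately show ?thesis by blast
  qed
  define x0 where "x0 = w - sum h {Suc i..j}"
  have x0M: "x0 \<in> Mp i'" unfolding x0_def
  proof (rule csub_diff[OF csub_Mp wM])
    show "sum h {Suc i..j} \<in> Mp i'" using hM by (intro csub_sum[OF csub_Mp]) blast
  qed
  have "shp T (t i) (k i) x0 = u - (\<Sum>l\<in>{Suc i..j}. shp T (t i) (k i) (h l))"
    unfolding x0_def u_def by (simp add: lin_diff[OF lin_shp] lin_sum[OF lin_shp])
  also have "\<dots> = 0" using ug sh by simp
  finally have sx0: "shp T (t i) (k i) x0 = 0" .
  have Ii: "inv (Mp i')" using struct[OF g mN, of m] ij jm i' by simp
  have bi: "bnd (Mp i') (t i)" using goodH_bnd[OF g, of i'] ij jm i' by simp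
  have x0E: "x0 \<in> Eig (t i)" using LA[OF csub_Mp Ii bi x0M sx0] .
  define f where "f l = (if l = i then x0 else h l)" for l
  have "\<forall>l\<in>{i..j}. f l \<in> Eig (t l)" using x0E hE by (auto simp: f_def)
  moreover have "sum f {i..j} = w"
  proof -
    have "sum f {i..j} = f i + sum f {Suc i..j}" using ij by (rule sum.atLeast_Suc_atMost)
    also have "sum f {Suc i..j} = sum h {Suc i..j}" by (rule sum.cong) (auto simp: f_def)
    finally show ?thesis by (simp add: f_def x0_def)
  qed
  ultimately show ?case by metis
qed

end

context opctx begin

lemma eig_prodop: "x \<in> Eig c \<Longrightarrow> \<exists>a. prodop T fs x = scaleC a x"
proof (induction fs)
  case Nil thus ?case by (intro exI[of _ 1]) (simp add: scaleC_one)
next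
  case (Cons b fs)
  obtain c' n where b: "b = (c', n)" by (cases b)
  obtain a where a: "prodop T fs x = scaleC a x" using Cons by blast
  have "prodop T (b # fs) x = scaleC a (scaleC ((c - c')^n) x)"
    using eig_shp[OF Cons.prems] by (simp add: b a lin_scaleC[OF lin_shp])
  thus ?case by (simp add: scaleC_scaleC) blast
qed

lemma kill: "x \<in> Eig c \<Longrightarrow> (c, n) \<in> set fs \<Longrightarrow> n > 0 \<Longrightarrow> prodop T fs x = 0"
proof (induction fs)
  case Nil thus ?case by simp
next
  case (Cons b fs)
  obtain c' n' where b: "b = (c', n')" by (cases b)
  show ?case
  proof (cases "(c, n) \<in> set fs")
    case True
    thus ?thesis using Cons by (simp add: b lin_zero[OF lin_shp])
  next
    case False
    hence cn: "c' = c" "n' = n" using Cons.prems b by auto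
    obtain a where a: "prodop T fs x = scaleC a x" using eig_prodop[OF Cons.prems(1)] by blast
    have "prodop T (b # fs) x = scaleC a (scaleC ((c - c)^n) x)"
      using eig_shp[OF Cons.prems(1)] by (simp add: b a cn lin_scaleC[OF lin_shp])
    thus ?thesis using Cons.prems(3) by (simp add: zero_power)
  qed
qed

lemma kill_R: "l \<in> {1..j} \<Longrightarrow> j \<le> N \<Longrightarrow> x \<in> Eig (t l) \<Longrightarrow> x \<in> Rsp T t k j"
proof -
  assume l: "l \<in> {1..j}" and jN: "j \<le> N" and x: "x \<in> Eig (t l)"
  have "l \<in> set (rev [1..<j+1])" using l by auto
  hence "(t l, k l) \<in> set (factors t k (rev [1..<j+1]))"
    unfolding factors_def set_map by (rule imageI)
  moreover have "k l > 0" using l jN kpos by auto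
  ultimately have "prodop T (factors t k (rev [1..<j+1])) x = 0" using kill[OF x] by blast
  thus ?thesis by (simp add: Rsp_def)
qed

lemma csub_Rsp: "csub (Rsp T t k j)"
  unfolding Rsp_def csub_def by (simp add: lin_add[OF lin_prodop] lin_scaleC[OF lin_prodop] lin_zero[OF lin_prodop])

lemma R_decomp:
  assumes g: "goodH m" and mN: "m \<le> N" and jm: "j \<le> m" and r: "r \<in> Rsp T t k j"
  shows "\<exists>f. (\<forall>l\<in>{1..j}. f l \<in> Eig (t l)) \<and> r = sum f {1..j}"
proof (rule claimC[OF g mN jm])
  show "prodop T (factors t k (rev [1..<Suc j])) r = 0" using r by (simp add: Rsp_def)
qed (simp_all add: Mp_0)

lemma L_eq:
  assumes g: "goodH m" and mN: "m \<le> N" and j: "j \<in> {1..m}"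
  shows "Lsp T t k j = Eig (t j)"
proof -
  obtain j' where j': "j = Suc j'" using j by (cases j) auto
  have EM: "Eig (t j) \<subseteq> Mp j'" using struct[OF g mN, of m] j j' by force
  show ?thesis
  proof
    show "Eig (t j) \<subseteq> Lsp T t k j"
    proof
      fix e assume e: "e \<in> Eig (t j)"
      have "e \<in> Rsp T t k j" using kill_R[OF _ _ e] j mN by simp
      moreover have "cinner e r = 0" if r: "r \<in> Rsp T t k j'" for r
      proof -
        obtain f where f: "\<forall>l\<in>{1..j'}. f l \<in> Eig (t l)" and rf: "r = sum f {1..j'}"
          using R_decomp[OF g mN _ r] j j' by auto
        have em: "e \<in> Mp j'" using EM e by auto
        have "cinner e r = (\<Sum>l\<in>{1..j'}. cinner e (f l))" by (simp add: rf cinner_sum_right)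
        also have "\<dots> = 0" using Mp_cinner[OF em] f by (intro sum.neutral) auto
        finally show ?thesis .
      qed
      ultimately show "e \<in> Lsp T t k j" by (simp add: Lsp_def orth_def j')
    qed
  next
    show "Lsp T t k j \<subseteq> Eig (t j)"
    proof
      fix x assume x: "x \<in> Lsp T t k j"
      hence xR: "x \<in> Rsp T t k j" and xo: "x \<in> orth (Rsp T t k j')" by (auto simp: Lsp_def j')
      obtain f where f: "\<forall>l\<in>{1..j}. f l \<in> Eig (t l)" and xf: "x = sum f {1..j}"
        using R_decomp[OF g mN _ xR] j by auto
      define r where "r = sum f {1..j'}"
      have xr: "x = r + f j" unfolding xf r_def j' by simp
      have rR: "r \<in> Rsp T t k j'" unfolding r_def
        using f j j' mN by (intro csub_sum[OF csub_Rsp] kill_R) auto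
      have "cinner x r = 0" using xo rR by (simp add: orth_def)
      moreover have "cinner (f j) r = 0"
      proof -
        have fj: "f j \<in> Mp j'" using EM f j by auto
        have "cinner (f j) r = (\<Sum>l\<in>{1..j'}. cinner (f j) (f l))" by (simp add: r_def cinner_sum_right)
        also have "\<dots> = 0" using Mp_cinner[OF fj] f j' by (intro sum.neutral) auto
        finally show ?thesis .
      qed
      ultimately have "cinner r r = 0"
        using cinner_diff_left[of x "f j" r] xr by simp
      hence "r = 0" using cinner_eq_zero_iff by blast
      thus "x \<in> Eig (t j)" using xr f j by auto
    qed
  qed
qed

lemma Msp_eq:
  assumes g: "goodH m" and mN: "m \<le> N" and jm: "j \<le> m"
  shows "Msp T t k j = Mp j"
proof -
  have "(\<Union>i\<in>{1..j}. Lsp T t k i) = (\<Union>i\<in>{1..j}. Eig (t i))"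
    using L_eq[OF g mN] jm by (intro SUP_cong) auto
  thus ?thesis by (simp add: Msp_def Mp_def)
qed

end

context opctx begin

lemma opnorm_bnd:
  assumes M: "csub M" and o: "opnorm_on M T \<le> c"
  shows "bnd M (complex_of_real c)"
  unfolding bnd_def
proof
  fix x assume x: "x \<in> M"
  obtain K where K: "\<forall>x. norm (T x) \<le> norm x * K" using Tbnd by blast
  have bdd: "bdd_above {norm (T x) | x. x \<in> M \<and> norm x \<le> 1}"
  proof (rule bdd_aboveI)
    fix a assume "a \<in> {norm (T x) | x. x \<in> M \<and> norm x \<le> 1}"
    then obtain y where y: "a = norm (T y)" "norm y \<le> 1" by blast
    have "norm (T y) \<le> norm y * K" using K by blast
    also have "\<dots> \<le> norm y * \<bar>K\<bar>" by (simp add: mult_left_mono)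
    also have "\<dots> \<le> 1 * \<bar>K\<bar>" using y(2) by (intro mult_right_mono) simp_all
    finally show "a \<le> \<bar>K\<bar>" using y by simp
  qed
  show "norm (T x) \<le> cmod (complex_of_real c) * norm x"
  proof (cases "x = 0")
    case True thus ?thesis by (simp add: lin_zero[OF Tlin])
  next
    case False
    hence nx: "norm x > 0" by simp
    define y where "y = scaleC (complex_of_real (1 / norm x)) x"
    have yM: "y \<in> M" unfolding y_def using M x by (rule csub_scaleC)
    have ny: "norm y = 1" unfolding y_def norm_scaleC using nx by (simp add: norm_divide)
    have Ty: "norm (T y) = norm (T x) / norm x"
      unfolding y_def lin_scaleC[OF Tlin] norm_scaleC using nx by (simp add: norm_divide)
    have "norm (T y) \<le> opnorm_on M T"
      unfolding opnorm_on_def using yM ny by (intro cSup_upper[OF _ bdd]) auto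
    hence "norm (T x) / norm x \<le> c" using o Ty by simp
    hence "norm (T x) \<le> c * norm x" using nx by (simp add: divide_le_eq)
    moreover have "c \<ge> 0"
    proof -
      have "0 \<le> norm (T y)" by simp
      thus ?thesis using \<open>norm (T y) \<le> opnorm_on M T\<close> o by linarith
    qed
    ultimately show ?thesis by simp
  qed
qed

lemma goodH_Suc: "goodH (Suc j) \<longleftrightarrow> goodH j \<and> bnd (Mp j) (t (Suc j))"
proof -
  have "{1..Suc j} = insert (Suc j) {1..j}" by auto
  thus ?thesis unfolding goodH_def by (simp add: conj_commute)
qed

lemma final3:
  assumes g: "goodH m" and mN: "m \<le> N" and x: "x \<in> Mp m"
  shows "prodop T (factors t k [m+1..<N+1]) x = 0"
proof -
  define A where "A = [1..<m+1]"
  define B where "B = [m+1..<N+1]"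
  have "[1..<N+1] = A @ B"
    unfolding A_def B_def using upt_add_eq_append[of 1 "m+1" "N-m"] mN by simp
  hence "rev [1..<N+1] = rev B @ rev A" by simp
  hence "prodop T (factors t k (rev [1..<N+1]))
      = prodop T (factors t k (rev B)) \<circ> prodop T (factors t k (rev A))"
    by (simp add: factors_def prodop_append)
  also have "prodop T (factors t k (rev B)) = prodop T (factors t k B)"
    unfolding factors_def rev_map[symmetric] by (rule prodop_rev)
  also have "prodop T (factors t k B) \<circ> prodop T (factors t k (rev A))
      = prodop T (factors t k (rev A)) \<circ> prodop T (factors t k B)"
    using comm_prodop unfolding comm_def by metis
  finally have P: "prodop T (factors t k (rev A)) (prodop T (factors t k B) x) = 0"
    using poly0 by (metis comp_apply)
  define y where "y = prodop T (factors t k B) x"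
  have I: "inv (Mp m)" using struct[OF g mN, of m] by simp
  have yM: "y \<in> Mp m" unfolding y_def using prodop_pres[OF csub_Mp I x] .
  have "y \<in> Rsp T t k m" using P by (simp add: Rsp_def y_def A_def)
  then obtain f where f: "\<forall>l\<in>{1..m}. f l \<in> Eig (t l)" and yf: "y = sum f {1..m}"
    using R_decomp[OF g mN order_refl] by blast
  have "cinner y y = (\<Sum>l\<in>{1..m}. cinner y (f l))" by (subst (2) yf) (simp add: cinner_sum_right)
  also have "\<dots> = 0" using Mp_cinner[OF yM] f by (intro sum.neutral) auto
  finally have "y = 0" using cinner_eq_zero_iff by blast
  thus ?thesis by (simp add: y_def B_def)
qed

lemma main:
  "\<exists>m \<le> N.
     (\<forall>i\<in>{1..m}. \<forall>x\<in>Lsp T t k i. T x = scaleC (t i) x) \<and>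
     (\<forall>x\<in>Msp T t k m. T x \<in> Msp T t k m) \<and>
     (\<exists>S :: 'a \<Rightarrow> 'a. (\<forall>x\<in>Msp T t k m. S x = T x) \<and>
        (\<forall>x\<in>Msp T t k m. prodop S (factors t k [m+1..<N+1]) x = 0) \<and>
        (\<forall>i\<in>{m+1..N}. opnorm_on (Msp T t k m) S > norm (t i)))"
proof -
  define P where "P m \<longleftrightarrow> m < N \<and> cmod (t (Suc m)) < opnorm_on (Msp T t k m) T" for m
  define m0 where "m0 = (if \<exists>m. P m then (LEAST m. P m) else N)"
  have notP: "\<not> P j" if "j < m0" for j
  proof (cases "\<exists>m. P m")
    case True
    hence "m0 = (LEAST m. P m)" by (simp add: m0_def)
    thus ?thesis using not_less_Least that by blast
  next
    case False thus ?thesis by blast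
  qed
  have m0N: "m0 \<le> N"
  proof (cases "\<exists>m. P m")
    case True
    hence "P (LEAST m. P m)" by (rule LeastI_ex)
    moreover have "P m \<Longrightarrow> m < N" for m by (simp add: P_def)
    ultimately have "(LEAST m. P m) < N" by blast
    thus ?thesis using True by (simp add: m0_def)
  qed (simp add: m0_def)
  have gall: "j \<le> m0 \<Longrightarrow> goodH j" for j
  proof (induction j)
    case 0 thus ?case by (simp add: goodH_def)
  next
    case (Suc j)
    hence gj: "goodH j" by simp
    have jN: "j < N" using Suc.prems m0N by simp
    have "\<not> P j" using notP Suc.prems by simp
    hence "opnorm_on (Msp T t k j) T \<le> cmod (t (Suc j))" using jN by (simp add: P_def)
    hence "opnorm_on (Mp j) T \<le> cmod (t (Suc j))" using Msp_eq[OF gj _ order_refl] jN by simp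
    hence "bnd (Mp j) (complex_of_real (cmod (t (Suc j))))" by (rule opnorm_bnd[OF csub_Mp])
    hence "bnd (Mp j) (t (Suc j))" by (simp add: bnd_def)
    thus ?case using gj by (simp add: goodH_Suc)
  qed
  have g: "goodH m0" using gall by simp
  have Meq: "Msp T t k m0 = Mp m0" using Msp_eq[OF g m0N order_refl] .
  have I: "inv (Mp m0)" using struct[OF g m0N, of m0] by simp
  show ?thesis
  proof (intro exI[of _ m0] conjI m0N exI[of _ T])
    show "\<forall>i\<in>{1..m0}. \<forall>x\<in>Lsp T t k i. T x = scaleC (t i) x"
      using L_eq[OF g m0N] by (auto simp: Eig_def)
    show "\<forall>x\<in>Msp T t k m0. T x \<in> Msp T t k m0" using I Meq by (simp add: inv_def)
    show "\<forall>x\<in>Msp T t k m0. T x = T x" by simp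
    show "\<forall>x\<in>Msp T t k m0. prodop T (factors t k [m0+1..<N+1]) x = 0"
      using final3[OF g m0N] Meq by simp
    show "\<forall>i\<in>{m0+1..N}. opnorm_on (Msp T t k m0) T > norm (t i)"
    proof
      fix i assume i: "i \<in> {m0+1..N}"
      show "opnorm_on (Msp T t k m0) T > norm (t i)"
      proof (cases "\<exists>m. P m")
        case True
        hence "P (LEAST m. P m)" by (rule LeastI_ex)
        hence Pm: "P m0" using True by (simp add: m0_def)
        have "norm (t i) \<le> norm (t (Suc m0))" using tmono[of "Suc m0" i] i by simp
        thus ?thesis using Pm by (simp add: P_def)
      next
        case False
        hence "m0 = N" by (simp add: m0_def)
        thus ?thesis using i by simp
      qed
    qed
  qed
qed

end

theorem mainTheorem7:
  fixes T :: "'a::chilbert \<Rightarrow> 'a"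
    and t :: "nat \<Rightarrow> complex" and k :: "nat \<Rightarrow> nat" and N :: nat
  assumes "bounded_clinear T"
    and "prodop T (factors t k (rev [1..<N+1])) = (\<lambda>x. 0)"
    and "inj_on t {1..N}"
    and "\<And>i j. 1 \<le> i \<Longrightarrow> i \<le> j \<Longrightarrow> j \<le> N \<Longrightarrow> norm (t j) \<le> norm (t i)"
    and "\<And>i. 1 \<le> i \<Longrightarrow> i \<le> N \<Longrightarrow> 0 < k i"
  shows "\<exists>m \<le> N.
           (\<forall>i\<in>{1..m}. \<forall>x\<in>Lsp T t k i. T x = scaleC (t i) x) \<and>
           (\<forall>x\<in>Msp T t k m. T x \<in> Msp T t k m) \<and>
           (\<exists>S :: 'a \<Rightarrow> 'a. (\<forall>x\<in>Msp T t k m. S x = T x) \<and>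
              (\<forall>x\<in>Msp T t k m. prodop S (factors t k [m+1..<N+1]) x = 0) \<and>
              (\<forall>i\<in>{m+1..N}. opnorm_on (Msp T t k m) S > norm (t i)))"
proof -
  have "lin T" and "\<exists>K. \<forall>x. norm (T x) \<le> norm x * K"
    using assms(1) unfolding bounded_clinear_def lin_def by auto
  then interpret opctx T t k N
    using assms(2-5) by unfold_locales auto
  show ?thesis by (rule main)
qed

end
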